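(* Let $b>0$, $\sigma>0$, $\alpha,\beta>-1$ and $\mu,\eta\in\mathbb{R}$. Define on $\Lambda=[0,b]$ \[ {}^1\mathcal{J}_n(x)=x^{\sigma(\beta-\eta-\mu)}P_n^{(\alpha,\beta)}\!\Big(2\big(\tfrac{x}{b}\big)^\sigma-1\Big),\qquad {}^2\mathcal{J}_n(x)=x^{\sigma\eta}(b^\sigma-x^\sigma)^\alpha P_n^{(\alpha,\beta)}\!\Big(2\big(\tfrac{x}{b}\big)^\sigma-1\Big), \] and the weights $w_1(x)=x^{\sigma(2(\eta+\mu)-\beta)}(b^\sigma-x^\sigma)^{\alpha}$, $w_2(x)=x^{\sigma(\beta-2\eta)}(b^\sigma-x^\sigma)^{-\alpha}$. Then $\{{}^1\mathcal{J}_n\}_{n=0}^\infty$ is a complete set in $\mathbf L^2_{x^{\sigma-1}w_1}(\Lambda)$ and $\{{}^2\mathcal{J}_n\}_{n=0}^\infty$ is a complete set in $\mathbf L^2_{x^{\sigma-1}w_2}(\Lambda)$.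
   Context: $P_n^{(\alpha,\beta)}$ is the classical Jacobi polynomial. For a positive weight $\omega$ on $\Lambda=[0,b]$, $\mathbf L^2_\omega(\Lambda)=\{u:\int_\Lambda u^2\omega\,dx<\infty\}$ with norm $\|u\|_\omega=(\int_\Lambda u^2\omega\,dx)^{1/2}$. Complete means the linear span is dense in the space. *)

theory Defs
  imports "HOL-Analysis.Analysis"
begin

definition jacobiP :: "real \<Rightarrow> real \<Rightarrow> nat \<Rightarrow> real \<Rightarrow> real" where
  "jacobiP a b n x =
     (\<Sum>k=0..n. ((real n + a) gchoose (n - k)) * ((real n + b) gchoose k)
                 * ((x - 1) / 2) ^ k * ((x + 1) / 2) ^ (n - k))"

definition J1 :: "real \<Rightarrow> real \<Rightarrow> real \<Rightarrow> real \<Rightarrow> real \<Rightarrow> real \<Rightarrow> nat \<Rightarrow> real \<Rightarrow> real" where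
  "J1 b \<sigma> \<alpha> \<beta> \<mu> \<eta> n x =
     x powr (\<sigma> * (\<beta> - \<eta> - \<mu>)) * jacobiP \<alpha> \<beta> n (2 * (x / b) powr \<sigma> - 1)"

definition J2 :: "real \<Rightarrow> real \<Rightarrow> real \<Rightarrow> real \<Rightarrow> real \<Rightarrow> nat \<Rightarrow> real \<Rightarrow> real" where
  "J2 b \<sigma> \<alpha> \<beta> \<eta> n x =
     x powr (\<sigma> * \<eta>) * (b powr \<sigma> - x powr \<sigma>) powr \<alpha>
       * jacobiP \<alpha> \<beta> n (2 * (x / b) powr \<sigma> - 1)"

definition w1 :: "real \<Rightarrow> real \<Rightarrow> real \<Rightarrow> real \<Rightarrow> real \<Rightarrow> real \<Rightarrow> real \<Rightarrow> real" where
  "w1 b \<sigma> \<alpha> \<beta> \<mu> \<eta> x =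
     x powr (\<sigma> * (2 * (\<eta> + \<mu>) - \<beta>)) * (b powr \<sigma> - x powr \<sigma>) powr \<alpha>"

definition w2 :: "real \<Rightarrow> real \<Rightarrow> real \<Rightarrow> real \<Rightarrow> real \<Rightarrow> real \<Rightarrow> real" where
  "w2 b \<sigma> \<alpha> \<beta> \<eta> x =
     x powr (\<sigma> * (\<beta> - 2 * \<eta>)) * (b powr \<sigma> - x powr \<sigma>) powr (- \<alpha>)"

definition L2w :: "real \<Rightarrow> (real \<Rightarrow> real) \<Rightarrow> (real \<Rightarrow> real) set" where
  "L2w b \<omega> = {u. set_borel_measurable lborel {0..b} u \<and>
      (\<integral>\<^sup>+ x. ennreal ((u x)\<^sup>2 * \<omega> x) * indicator {0..b} x \<partial>lborel) < \<infinity>}"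

definition complete_in :: "real \<Rightarrow> (real \<Rightarrow> real) \<Rightarrow> (nat \<Rightarrow> real \<Rightarrow> real) \<Rightarrow> bool" where
  "complete_in b \<omega> \<phi> \<longleftrightarrow>
     (\<forall>n. \<phi> n \<in> L2w b \<omega>) \<and>
     (\<forall>u \<in> L2w b \<omega>. \<forall>\<epsilon>>0. \<exists>N c.
        (\<integral>\<^sup>+ x. ennreal ((u x - (\<Sum>n<N. c n * \<phi> n x))\<^sup>2 * \<omega> x) * indicator {0..b} x \<partial>lborel)
          < ennreal \<epsilon>)"

end

theory Submission
  imports Defs "HOL-Computational_Algebra.Polynomial" "HOL-Computational_Algebra.Formal_Power_Series"
begin

definition pm :: "real poly" where "pm = [:-1/2, 1/2:]"
definition pp :: "real poly" where "pp = [:1/2, 1/2:]"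
lemma pm_simps[simp]: "degree pm = 1" "lead_coeff pm = 1/2" "pm \<noteq> 0" "poly pm x = (x - 1)/2"
  by (auto simp: pm_def)
lemma pp_simps[simp]: "degree pp = 1" "lead_coeff pp = 1/2" "pp \<noteq> 0" "poly pp x = (x + 1)/2"
  by (auto simp: pp_def)

definition JP :: "real \<Rightarrow> real \<Rightarrow> nat \<Rightarrow> real poly" where
  "JP a b n = (\<Sum>k=0..n. smult (((real n + a) gchoose (n - k)) * ((real n + b) gchoose k))
                 (pm ^ k * pp ^ (n - k)))"

lemma poly_JP: "poly (JP a b n) x = jacobiP a b n x"
  unfolding JP_def jacobiP_def
  by (simp add: poly_sum mult.assoc)

lemma degree_JP: "degree (JP a b n) \<le> n"
  unfolding JP_def
proof (rule degree_sum_le)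
  fix k assume k: "k \<in> {0..n}"
  have "degree (pm ^ k * pp ^ (n - k) :: real poly) \<le> k + (n - k)"
  proof -
    have "degree (pm ^ k) \<le> k" using degree_power_le[of pm k] by simp
    moreover have "degree (pp ^ (n-k)) \<le> n - k" using degree_power_le[of pp "n-k"] by simp
    ultimately show ?thesis using degree_mult_le[of "pm ^ k" "pp ^ (n-k)"] by linarith
  qed
  then show "degree (smult (((real n + a) gchoose (n - k)) * ((real n + b) gchoose k))
                 (pm ^ k * pp ^ (n - k) :: real poly)) \<le> n"
    using k by (simp add: order.trans[OF degree_smult_le])
qed simp

lemma coeff_JP: "coeff (JP a b n) n = ((2 * real n + a + b) gchoose n) / 2 ^ n"
proof -
  have c: "coeff (pm ^ k * pp ^ (n - k) :: real poly) n = 1 / 2 ^ n"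
    if "k \<le> n" for k
  proof -
    have dk: "degree (pm ^ k :: real poly) = k" by (simp add: degree_power_eq)
    have dn: "degree (pp ^ (n-k) :: real poly) = n - k" by (simp add: degree_power_eq)
    have "coeff (pm ^ k * pp ^ (n - k) :: real poly) (k + (n - k))
        = lead_coeff (pm ^ k :: real poly) * lead_coeff (pp ^ (n-k) :: real poly)"
      using coeff_mult_degree_sum[of "pm ^ k :: real poly" "pp ^ (n-k)"]
      unfolding dk dn by simp
    also have "\<dots> = (1/2)^k * (1/2)^(n-k)" by (simp add: lead_coeff_power pm_def pp_def)
    also have "\<dots> = (1/2)^n" using that by (simp add: power_add[symmetric])
    finally show ?thesis using that by (simp add: power_one_over)
  qed
  have "coeff (JP a b n) n = (\<Sum>k=0..n. ((real n + a) gchoose (n - k)) * ((real n + b) gchoose k) * (1 / 2^n))"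
    unfolding JP_def coeff_sum by (intro sum.cong refl) (simp add: c)
  also have "\<dots> = (\<Sum>k=0..n. ((real n + b) gchoose k) * ((real n + a) gchoose (n - k))) / 2^n"
    by (simp add: sum_divide_distrib mult.commute)
  also have "\<dots> = ((2 * real n + a + b) gchoose n) / 2 ^ n"
    by (subst gbinomial_Vandermonde) (simp add: algebra_simps)
  finally show ?thesis .
qed

lemma coeff_JP_nz:
  assumes "a > -1" "b > -1"
  shows "coeff (JP a b n) n \<noteq> 0"
proof (cases n)
  case 0 then show ?thesis by (simp add: coeff_JP)
next
  case (Suc m)
  have "pochhammer (2 * real n + a + b - real n + 1) n > 0"
    by (rule pochhammer_pos) (use assms Suc in auto)
  then show ?thesis unfolding coeff_JP gbinomial_pochhammer' by simp
qed

lemma JP_span: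
  assumes "a > -1" "b > -1"
  shows "degree q \<le> n \<Longrightarrow> \<exists>c. \<forall>t. poly q t = (\<Sum>k<Suc n. c k * jacobiP a b k t)"
proof (induction n arbitrary: q)
  case 0
  then obtain c0 where q: "q = [:c0:]" by (meson degree_eq_zeroE le_zero_eq)
  have "poly (JP a b 0) t = 1" for t unfolding JP_def by simp
  then show ?case using q by (intro exI[of _ "\<lambda>_. c0"]) (simp add: poly_JP[symmetric])
next
  case (Suc n)
  define r where "r = q - smult (coeff q (Suc n) / coeff (JP a b (Suc n)) (Suc n)) (JP a b (Suc n))"
  have d1: "degree r \<le> Suc n" unfolding r_def
    using Suc.prems degree_JP[of a b "Suc n"]
    by (meson degree_diff_le degree_smult_le order.trans)
  have d2: "coeff r (Suc n) = 0"
  proof -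
    define cJ where "cJ = coeff (JP a b (Suc n)) (Suc n)"
    define cq where "cq = coeff q (Suc n)"
    have nz: "cJ \<noteq> 0" unfolding cJ_def by (rule coeff_JP_nz[OF assms])
    have "coeff r (Suc n) = cq - cq / cJ * cJ"
      unfolding r_def cJ_def cq_def by (simp only: coeff_diff coeff_smult)
    also have "\<dots> = 0" using nz by simp
    finally show ?thesis .
  qed
  have "degree r \<le> n"
  proof (rule ccontr)
    assume d0: "\<not> degree r \<le> n"
    note d = d1 d2 d0
    then have ds: "degree r = Suc n" by simp
    then have "lead_coeff r = 0" using d(2) by simp
    then have "r = 0" by simp
    then show False using ds by simp
  qed
  then obtain c where c: "\<And>t. poly r t = (\<Sum>k<Suc n. c k * jacobiP a b k t)" using Suc.IH by blast
  define d where "d = coeff q (Suc n) / coeff (JP a b (Suc n)) (Suc n)"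
  show ?case
  proof (intro exI[of _ "c(Suc n := d)"] allI)
    fix t
    have "poly q t = poly r t + d * jacobiP a b (Suc n) t"
      unfolding r_def d_def by (simp add: poly_JP)
    also have "\<dots> = (\<Sum>k<Suc (Suc n). (c(Suc n := d)) k * jacobiP a b k t)"
      by (simp add: c)
    finally show "poly q t = (\<Sum>k<Suc (Suc n). (c(Suc n := d)) k * jacobiP a b k t)" .
  qed
qed

lemma polyfun_span:
  assumes "a > -1" "b > -1" "polynomial_function p"
  shows "\<exists>N c. \<forall>t. p t = (\<Sum>k<N. c k * jacobiP a b k t)"
proof -
  obtain A n where p: "p = (\<lambda>x. \<Sum>i\<le>n. A i * x ^ i)"
    using assms(3) unfolding real_polynomial_function_eq[symmetric] real_polynomial_function_iff_sum by blast
  define q where "q = (\<Sum>i\<le>n. monom (A i) i)"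
  have dm: "degree (monom (A i) i) \<le> n" if "i \<in> {..n}" for i
    using degree_monom_le[of "A i" i] that by simp
  have "degree q \<le> n" unfolding q_def
    by (rule degree_sum_le) (use dm in auto)
  then obtain c where c: "\<And>t. poly q t = (\<Sum>k<Suc n. c k * jacobiP a b k t)"
    using JP_span[OF assms(1,2)] by blast
  have "p t = poly q t" for t unfolding p q_def by (simp add: poly_sum poly_monom)
  then show ?thesis using c by metis
qed

definition Wf :: "real \<Rightarrow> real \<Rightarrow> real \<Rightarrow> real \<Rightarrow> real \<Rightarrow> real" where
  "Wf b \<sigma> \<alpha> \<beta> x = x powr (\<sigma>*\<beta>+\<sigma>-1) * (b powr \<sigma> - x powr \<sigma>) powr \<alpha>"

lemma Wf_nonneg: "Wf b \<sigma> \<alpha> \<beta> x \<ge> 0" by (simp add: Wf_def)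

lemma Wf_meas[measurable]: "Wf b \<sigma> \<alpha> \<beta> \<in> borel_measurable borel"
  unfolding Wf_def by measurable

lemma FTC_part:
  fixes b \<sigma> \<alpha> x0 :: real
  assumes b: "b > 0" and s: "\<sigma> > 0" and a: "\<alpha> > -1" and x0: "0 \<le> x0" "x0 \<le> b"
  shows "((\<lambda>x. x powr (\<sigma>-1) * (b powr \<sigma> - x powr \<sigma>) powr \<alpha>) has_integral
          ((b powr \<sigma> - x0 powr \<sigma>) powr (\<alpha>+1) / (\<sigma>*(\<alpha>+1)))) {x0..b}"
proof -
  define F where "F x = - ((b powr \<sigma> - x powr \<sigma>) powr (\<alpha>+1) / (\<sigma>*(\<alpha>+1)))" for x
  have "((\<lambda>x. x powr (\<sigma>-1) * (b powr \<sigma> - x powr \<sigma>) powr \<alpha>) has_integral (F b - F x0)) {x0..b}"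
  proof (rule fundamental_theorem_of_calculus_interior[where f=F])
    show "x0 \<le> b" by fact
    have c1: "continuous_on {x0..b} (\<lambda>x. x powr \<sigma>)"
      by (rule continuous_on_powr') (use s x0 in \<open>auto intro!: continuous_intros\<close>)
    have ge: "b powr \<sigma> - x powr \<sigma> \<ge> 0" if "x \<in> {x0..b}" for x
      using that x0 s by (auto intro!: powr_mono2)
    have "continuous_on {x0..b} (\<lambda>x. (b powr \<sigma> - x powr \<sigma>) powr (\<alpha>+1))"
      by (rule continuous_on_powr') (use ge a in \<open>auto intro!: continuous_intros c1\<close>)
    then show "continuous_on {x0..b} F" unfolding F_def
      by (intro continuous_on_minus continuous_on_divide continuous_on_const) (use s a in auto)
  next
    fix x assume x: "x \<in> {x0<..<b}"
    then have xp: "x > 0" using x0 by auto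
    have lt: "x powr \<sigma> < b powr \<sigma>" using x s xp by (auto intro!: powr_less_mono2)
    have "(F has_real_derivative
        - ((\<alpha>+1) * (b powr \<sigma> - x powr \<sigma>) powr (\<alpha>+1-1) * (0 - \<sigma> * x powr (\<sigma> - 1))) / (\<sigma>*(\<alpha>+1))) (at x)"
      unfolding F_def
      by (intro derivative_eq_intros DERIV_fun_powr has_real_derivative_powr) (use xp lt s a in auto)
    moreover have "- ((\<alpha>+1) * (b powr \<sigma> - x powr \<sigma>) powr (\<alpha>+1-1) * (0 - \<sigma> * x powr (\<sigma> - 1))) / (\<sigma>*(\<alpha>+1))
        = x powr (\<sigma>-1) * (b powr \<sigma> - x powr \<sigma>) powr \<alpha>"
    proof -
      have "\<sigma> * (\<alpha> + 1) > 0" using s a by (intro mult_pos_pos) auto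
      then have nz: "\<sigma> + \<alpha> * \<sigma> \<noteq> 0" by (simp add: algebra_simps)
      show ?thesis using nz by (simp add: field_simps)
    qed
    ultimately show "(F has_vector_derivative x powr (\<sigma>-1) * (b powr \<sigma> - x powr \<sigma>) powr \<alpha>) (at x)"
      by (simp add: has_real_derivative_iff_has_vector_derivative)
  qed
  moreover have "F b - F x0 = (b powr \<sigma> - x0 powr \<sigma>) powr (\<alpha>+1) / (\<sigma>*(\<alpha>+1))"
    unfolding F_def by simp
  ultimately show ?thesis by simp
qed

lemma W_fin:
  assumes b: "b > 0" and s: "\<sigma> > 0" and a: "\<alpha> > -1" and be: "\<beta> > -1"
  shows "(\<integral>\<^sup>+x. ennreal (Wf b \<sigma> \<alpha> \<beta> x) * indicator {0..b} x \<partial>lborel) < \<infinity>"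
proof -
  define B where "B = b powr \<sigma>"
  have Bp: "B > 0" using b by (simp add: B_def)
  define x0 where "x0 = (B / 2) powr (1/\<sigma>)"
  have x0p: "x0 > 0" using Bp by (simp add: x0_def)
  have x0s: "x0 powr \<sigma> = B / 2" using Bp s by (simp add: x0_def powr_powr)
  have "x0 \<le> B powr (1/\<sigma>)" unfolding x0_def using Bp s by (intro powr_mono2) auto
  also have "B powr (1/\<sigma>) = b" using b s by (simp add: B_def powr_powr)
  finally have x0b: "x0 \<le> b" .
  define C1 where "C1 = (B/2) powr \<alpha> + B powr \<alpha>"
  define C2 where "C2 = x0 powr (\<sigma>*\<beta>) + b powr (\<sigma>*\<beta>)"
  define p where "p = \<sigma>*\<beta>+\<sigma>-1"
  have "\<sigma>*\<beta> > \<sigma>*(-1)" using s be by (intro mult_strict_left_mono) auto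
  then have pp: "p > -1" unfolding p_def by simp
  have bound: "ennreal (Wf b \<sigma> \<alpha> \<beta> x) * indicator {0..b} x
      \<le> ennreal (C1 * x powr p) * indicator {0..x0} x
         + ennreal (C2 * (x powr (\<sigma>-1) * (b powr \<sigma> - x powr \<sigma>) powr \<alpha>)) * indicator {x0..b} x" for x
  proof (cases "x \<in> {0..b}")
    case False then show ?thesis by simp
  next
    case True
    then have x: "0 \<le> x" "x \<le> b" by auto
    have Yge: "B - x powr \<sigma> \<ge> 0" using x s by (auto simp: B_def intro!: powr_mono2)
    show ?thesis
    proof (cases "x \<le> x0")
      case True
      have "x powr \<sigma> \<le> B/2" using x0s True x s by (metis powr_mono2 less_eq_real_def)
      then have Y: "B/2 \<le> B - x powr \<sigma>" "B - x powr \<sigma> \<le> B" using x by auto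
      have "(B - x powr \<sigma>) powr \<alpha> \<le> C1"
      proof (cases "\<alpha> \<ge> 0")
        case True
        then have "(B - x powr \<sigma>) powr \<alpha> \<le> B powr \<alpha>" using Y Yge by (intro powr_mono2) auto
        then show ?thesis unfolding C1_def by (smt (verit) powr_ge_zero)
      next
        case False
        then have "(B - x powr \<sigma>) powr \<alpha> \<le> (B/2) powr \<alpha>" using Y Bp by (intro powr_mono2') auto
        then show ?thesis unfolding C1_def by (smt (verit) powr_ge_zero)
      qed
      then have "Wf b \<sigma> \<alpha> \<beta> x \<le> C1 * x powr p"
        unfolding Wf_def p_def B_def[symmetric]
        by (metis mult.commute mult_left_mono powr_ge_zero)
      then have "ennreal (Wf b \<sigma> \<alpha> \<beta> x) * indicator {0..b} x \<le> ennreal (C1 * x powr p) * indicator {0..x0} x"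
        using True x by (auto intro: ennreal_leI)
      then show ?thesis by (rule order.trans) simp
    next
      case False
      then have xx: "x0 \<le> x" by simp
      have "x powr (\<sigma>*\<beta>) \<le> C2"
      proof (cases "\<sigma>*\<beta> \<ge> 0")
        case True
        then have "x powr (\<sigma>*\<beta>) \<le> b powr (\<sigma>*\<beta>)" using x by (intro powr_mono2) auto
        then show ?thesis unfolding C2_def by (smt (verit) powr_ge_zero)
      next
        case False
        then have "x powr (\<sigma>*\<beta>) \<le> x0 powr (\<sigma>*\<beta>)" using xx x0p by (intro powr_mono2') auto
        then show ?thesis unfolding C2_def by (smt (verit) powr_ge_zero)
      qed
      moreover have "Wf b \<sigma> \<alpha> \<beta> x = x powr (\<sigma>*\<beta>) * (x powr (\<sigma>-1) * (b powr \<sigma> - x powr \<sigma>) powr \<alpha>)"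
        unfolding Wf_def by (simp add: powr_add[symmetric] algebra_simps)
      ultimately have "Wf b \<sigma> \<alpha> \<beta> x \<le> C2 * (x powr (\<sigma>-1) * (b powr \<sigma> - x powr \<sigma>) powr \<alpha>)"
        by (simp add: mult_right_mono)
      then have "ennreal (Wf b \<sigma> \<alpha> \<beta> x) * indicator {0..b} x
          \<le> ennreal (C2 * (x powr (\<sigma>-1) * (b powr \<sigma> - x powr \<sigma>) powr \<alpha>)) * indicator {x0..b} x"
        using xx x by (auto intro: ennreal_leI)
      then show ?thesis by (rule order.trans) simp
    qed
  qed
  have C1p: "C1 \<ge> 0" "C2 \<ge> 0" by (simp_all add: C1_def C2_def)
  have I1: "((\<lambda>x. C1 * x powr p) has_integral (C1 * (x0 powr (p+1) / (p+1)))) {0..x0}"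
    by (intro has_integral_mult_right has_integral_powr_from_0) (use pp x0p in auto)
  have I2: "((\<lambda>x. C2 * (x powr (\<sigma>-1) * (b powr \<sigma> - x powr \<sigma>) powr \<alpha>)) has_integral
          (C2 * ((b powr \<sigma> - x0 powr \<sigma>) powr (\<alpha>+1) / (\<sigma>*(\<alpha>+1))))) {x0..b}"
    by (intro has_integral_mult_right FTC_part) (use b s a x0p x0b in auto)
  have "(\<integral>\<^sup>+x. ennreal (Wf b \<sigma> \<alpha> \<beta> x) * indicator {0..b} x \<partial>lborel)
     \<le> (\<integral>\<^sup>+x. ennreal (C1 * x powr p) * indicator {0..x0} x
         + ennreal (C2 * (x powr (\<sigma>-1) * (b powr \<sigma> - x powr \<sigma>) powr \<alpha>)) * indicator {x0..b} x \<partial>lborel)"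
    by (intro nn_integral_mono bound)
  also have "\<dots> = (\<integral>\<^sup>+x. ennreal (C1 * x powr p) * indicator {0..x0} x \<partial>lborel)
      + (\<integral>\<^sup>+x. ennreal (C2 * (x powr (\<sigma>-1) * (b powr \<sigma> - x powr \<sigma>) powr \<alpha>)) * indicator {x0..b} x \<partial>lborel)"
    by (intro nn_integral_add) auto
  also have "\<dots> = ennreal (C1 * (x0 powr (p+1) / (p+1)))
      + ennreal (C2 * ((b powr \<sigma> - x0 powr \<sigma>) powr (\<alpha>+1) / (\<sigma>*(\<alpha>+1))))"
    using nn_integral_has_integral_lebesgue'[OF _ I1] nn_integral_has_integral_lebesgue'[OF _ I2] C1p
    by simp
  also have "\<dots> < \<infinity>" by simp
  finally show ?thesis .
qed

definition Qn :: "real \<Rightarrow> (real \<Rightarrow> real) \<Rightarrow> (real \<Rightarrow> real) \<Rightarrow> ennreal" where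
  "Qn b W a = (\<integral>\<^sup>+x. ennreal ((a x)\<^sup>2 * W x) * indicator {0..b} x \<partial>lborel)"

definition Ap :: "real \<Rightarrow> (real \<Rightarrow> real) \<Rightarrow> (real \<Rightarrow> real) \<Rightarrow> (real \<Rightarrow> real) \<Rightarrow> bool" where
  "Ap b W g f \<longleftrightarrow> (\<forall>e>0. \<exists>p. polynomial_function p \<and> Qn b W (\<lambda>x. f x - p (g x)) < ennreal e)"

lemma ennreal_quarter:
  assumes "x < ennreal (e/4)" "y < ennreal (e/4)"
  shows "2 * x + 2 * y < ennreal e"
proof -
  obtain x' where x: "x = ennreal x'" "x' \<ge> 0" using assms(1) by (cases x rule: ennreal_cases) auto
  obtain y' where y: "y = ennreal y'" "y' \<ge> 0" using assms(2) by (cases y rule: ennreal_cases) auto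
  have "x' < e/4" "y' < e/4" using assms x y by (auto simp: ennreal_less_iff)
  then have lt: "2 * x' + 2 * y' < e" and ep: "e > 0" using x y by auto
  have "2 * x + 2 * y = ennreal (2 * x' + 2 * y')"
    using x y by (simp add: ennreal_plus ennreal_mult)
  also have "\<dots> < ennreal e" by (rule ennreal_lessI[OF ep lt])
  finally show ?thesis .
qed

locale wsetup =
  fixes b :: real and W :: "real \<Rightarrow> real" and g :: "real \<Rightarrow> real"
  assumes Wnn: "\<And>x. W x \<ge> 0" and Wm: "W \<in> borel_measurable borel"
    and Wfin: "(\<integral>\<^sup>+x. ennreal (W x) * indicator {0..b} x \<partial>lborel) < \<infinity>"
    and gc: "continuous_on {0..b} g" and gi: "inj_on g {0..b}"
    and gm: "g \<in> borel_measurable borel"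

context wsetup
begin

declare Wm[measurable] gm[measurable]

lemma Qn_sum:
  assumes "\<And>x. (a x)\<^sup>2 \<le> 2 * (c x)\<^sup>2 + 2 * (d x)\<^sup>2"
    and [measurable]: "c \<in> borel_measurable borel" "d \<in> borel_measurable borel"
  shows "Qn b W a \<le> 2 * Qn b W c + 2 * Qn b W d"
proof -
  have "Qn b W a \<le> (\<integral>\<^sup>+x. ennreal (2 * ((c x)\<^sup>2 * W x)) * indicator {0..b} x
                       + ennreal (2 * ((d x)\<^sup>2 * W x)) * indicator {0..b} x \<partial>lborel)"
    unfolding Qn_def
  proof (intro nn_integral_mono)
    fix x
    have "(a x)\<^sup>2 * W x \<le> (2 * (c x)\<^sup>2 + 2 * (d x)\<^sup>2) * W x"
      using assms(1) Wnn by (intro mult_right_mono) auto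
    then have "(a x)\<^sup>2 * W x \<le> 2 * ((c x)\<^sup>2 * W x) + 2 * ((d x)\<^sup>2 * W x)"
      by (simp add: algebra_simps)
    then have "ennreal ((a x)\<^sup>2 * W x) \<le> ennreal (2 * ((c x)\<^sup>2 * W x) + 2 * ((d x)\<^sup>2 * W x))"
      by (rule ennreal_leI)
    also have "\<dots> = ennreal (2 * ((c x)\<^sup>2 * W x)) + ennreal (2 * ((d x)\<^sup>2 * W x))"
      using Wnn[of x] by (intro ennreal_plus) auto
    finally have "ennreal ((a x)\<^sup>2 * W x) \<le> ennreal (2 * ((c x)\<^sup>2 * W x)) + ennreal (2 * ((d x)\<^sup>2 * W x))" .
    then show "ennreal ((a x)\<^sup>2 * W x) * indicator {0..b} x \<le>
        ennreal (2 * ((c x)\<^sup>2 * W x)) * indicator {0..b} x + ennreal (2 * ((d x)\<^sup>2 * W x)) * indicator {0..b} x"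
      by (auto simp: indicator_def)
  qed
  also have "\<dots> = (\<integral>\<^sup>+x. ennreal (2 * ((c x)\<^sup>2 * W x)) * indicator {0..b} x \<partial>lborel)
        + (\<integral>\<^sup>+x. ennreal (2 * ((d x)\<^sup>2 * W x)) * indicator {0..b} x \<partial>lborel)"
    by (intro nn_integral_add) auto
  also have "\<dots> = 2 * Qn b W c + 2 * Qn b W d"
  proof -
    have *: "(\<integral>\<^sup>+x. ennreal (2 * ((k x)\<^sup>2 * W x)) * indicator {0..b} x \<partial>lborel) = 2 * Qn b W k"
      if [measurable]: "k \<in> borel_measurable borel" for k
    proof -
      have "(\<integral>\<^sup>+x. ennreal (2 * ((k x)\<^sup>2 * W x)) * indicator {0..b} x \<partial>lborel)
          = (\<integral>\<^sup>+x. 2 * (ennreal ((k x)\<^sup>2 * W x) * indicator {0..b} x) \<partial>lborel)"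
        using Wnn by (intro nn_integral_cong) (simp add: ennreal_mult mult.assoc)
      also have "\<dots> = 2 * Qn b W k" unfolding Qn_def by (rule nn_integral_cmult) measurable
      finally show ?thesis .
    qed
    show ?thesis by (simp only: *[OF assms(2)] *[OF assms(3)])
  qed
  finally show ?thesis .
qed

lemma polyg_meas[measurable]: fixes p :: "real \<Rightarrow> real" assumes "polynomial_function p" shows "(\<lambda>x. p (g x)) \<in> borel_measurable borel"
  by (intro measurable_compose[OF gm] borel_measurable_continuous_onI continuous_on_polymonial_function assms)

lemma sq_sum_le: "((u::real) + v)\<^sup>2 \<le> 2 * u\<^sup>2 + 2 * v\<^sup>2"
proof -
  have "0 \<le> (u - v)\<^sup>2" by simp
  then show ?thesis by (simp add: power2_eq_square algebra_simps)
qed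

lemma Ap_lim:
  assumes fm[measurable]: "f \<in> borel_measurable borel"
  assumes "\<And>e. e > 0 \<Longrightarrow> \<exists>k. k \<in> borel_measurable borel \<and> Ap b W g k \<and> Qn b W (\<lambda>x. f x - k x) < ennreal e"
  shows "Ap b W g f"
  unfolding Ap_def
proof (intro allI impI)
  fix e :: real assume e: "e > 0"
  then obtain k where km[measurable]: "k \<in> borel_measurable borel" and k: "Ap b W g k"
    and fk: "Qn b W (\<lambda>x. f x - k x) < ennreal (e/4)" using assms(2)[of "e/4"] by auto
  obtain p where p: "polynomial_function p" and kp: "Qn b W (\<lambda>x. k x - p (g x)) < ennreal (e/4)"
    using k e unfolding Ap_def by (meson zero_less_divide_iff zero_less_numeral)
  have "Qn b W (\<lambda>x. f x - p (g x)) \<le> 2 * Qn b W (\<lambda>x. f x - k x) + 2 * Qn b W (\<lambda>x. k x - p (g x))"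
  proof (rule Qn_sum)
    show "(\<lambda>x. k x - p (g x)) \<in> borel_measurable borel" using polyg_meas[OF p] by measurable
    show "(\<lambda>x. f x - k x) \<in> borel_measurable borel" by measurable
    show "(f x - p (g x))\<^sup>2 \<le> 2 * (f x - k x)\<^sup>2 + 2 * (k x - p (g x))\<^sup>2" for x
      using sq_sum_le[of "f x - k x" "k x - p (g x)"] by simp
  qed
  also have "\<dots> < ennreal e" by (rule ennreal_quarter[OF fk kp])
  finally show "\<exists>p. polynomial_function p \<and> Qn b W (\<lambda>x. f x - p (g x)) < ennreal e"
    using p by blast
qed

lemma Ap_add:
  assumes [measurable]: "f \<in> borel_measurable borel" "h \<in> borel_measurable borel"
    and "Ap b W g f" "Ap b W g h"
  shows "Ap b W g (\<lambda>x. f x + h x)"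
  unfolding Ap_def
proof (intro allI impI)
  fix e :: real assume e: "e > 0"
  obtain p where p: "polynomial_function p" and fp: "Qn b W (\<lambda>x. f x - p (g x)) < ennreal (e/4)"
    using assms(3) e unfolding Ap_def by (meson zero_less_divide_iff zero_less_numeral)
  obtain q where q: "polynomial_function q" and hq: "Qn b W (\<lambda>x. h x - q (g x)) < ennreal (e/4)"
    using assms(4) e unfolding Ap_def by (meson zero_less_divide_iff zero_less_numeral)
  have "Qn b W (\<lambda>x. f x + h x - (\<lambda>x. p x + q x) (g x)) \<le> 2 * Qn b W (\<lambda>x. f x - p (g x)) + 2 * Qn b W (\<lambda>x. h x - q (g x))"
  proof (rule Qn_sum)
    show "(\<lambda>x. f x - p (g x)) \<in> borel_measurable borel" using polyg_meas[OF p] by measurable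
    show "(\<lambda>x. h x - q (g x)) \<in> borel_measurable borel" using polyg_meas[OF q] by measurable
    show "(f x + h x - (\<lambda>x. p x + q x) (g x))\<^sup>2 \<le> 2 * (f x - p (g x))\<^sup>2 + 2 * (h x - q (g x))\<^sup>2" for x
      using sq_sum_le[of "f x - p (g x)" "h x - q (g x)"] by (simp add: algebra_simps)
  qed
  also have "\<dots> < ennreal e" by (rule ennreal_quarter[OF fp hq])
  finally show "\<exists>p. polynomial_function p \<and> Qn b W (\<lambda>x. f x + h x - p (g x)) < ennreal e"
    using p q by (intro exI[of _ "\<lambda>x. p x + q x"]) auto
qed

lemma Qn_scale:
  assumes [measurable]: "a \<in> borel_measurable borel"
  shows "Qn b W (\<lambda>x. c * a x) = ennreal (c\<^sup>2) * Qn b W a"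
proof -
  have "Qn b W (\<lambda>x. c * a x) = (\<integral>\<^sup>+x. ennreal (c\<^sup>2) * (ennreal ((a x)\<^sup>2 * W x) * indicator {0..b} x) \<partial>lborel)"
    unfolding Qn_def
  proof (intro nn_integral_cong)
    fix x
    have "ennreal ((c * a x)\<^sup>2 * W x) = ennreal (c\<^sup>2) * ennreal ((a x)\<^sup>2 * W x)"
      using Wnn[of x] by (subst ennreal_mult[symmetric]) (auto simp: power_mult_distrib mult.assoc)
    then show "ennreal ((c * a x)\<^sup>2 * W x) * indicator {0..b} x = ennreal (c\<^sup>2) * (ennreal ((a x)\<^sup>2 * W x) * indicator {0..b} x)"
      by (simp add: mult.assoc)
  qed
  also have "\<dots> = ennreal (c\<^sup>2) * Qn b W a" unfolding Qn_def by (rule nn_integral_cmult) measurable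
  finally show ?thesis .
qed

lemma Ap_scale:
  assumes "Ap b W g f" and fm[measurable]: "f \<in> borel_measurable borel"
  shows "Ap b W g (\<lambda>x. c * f x)"
  unfolding Ap_def
proof (intro allI impI)
  fix e :: real assume e: "e > 0"
  show "\<exists>p. polynomial_function p \<and> Qn b W (\<lambda>x. c * f x - p (g x)) < ennreal e"
  proof (cases "c = 0")
    case True
    then show ?thesis by (intro exI[of _ "\<lambda>x. 0"]) (auto simp: Qn_def e)
  next
    case False
    then have c2: "c\<^sup>2 > 0" by simp
    obtain p where p: "polynomial_function p" and fp: "Qn b W (\<lambda>x. f x - p (g x)) < ennreal (e / c\<^sup>2)"
      using assms e c2 unfolding Ap_def by (meson divide_pos_pos)
    have "Qn b W (\<lambda>x. c * f x - c * p (g x)) = ennreal (c\<^sup>2) * Qn b W (\<lambda>x. f x - p (g x))"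
      using polyg_meas[OF p] by (subst Qn_scale[symmetric]) (simp_all add: algebra_simps)
    also have "\<dots> < ennreal (c\<^sup>2) * ennreal (e / c\<^sup>2)"
      by (rule ennreal_mult_strict_left_mono[OF fp]) (use c2 in auto)
    also have "\<dots> = ennreal (c\<^sup>2 * (e / c\<^sup>2))" by (rule ennreal_mult[symmetric]) (use c2 e in auto)
    also have "\<dots> = ennreal e" using c2 by simp
    moreover have "polynomial_function (\<lambda>x. c * p x)" using polynomial_function_cmul[OF p, of c] by simp
    ultimately show ?thesis by (intro exI[of _ "\<lambda>x. c * p x"]) auto
  qed
qed

lemma Ap_zero: "Ap b W g (\<lambda>x. 0)"
  unfolding Ap_def by (intro allI impI exI[of _ "\<lambda>x. 0"]) (auto simp: Qn_def)

lemma Ap_sum: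
  assumes "finite F" "\<And>i. i \<in> F \<Longrightarrow> f i \<in> borel_measurable borel" "\<And>i. i \<in> F \<Longrightarrow> Ap b W g (f i)"
  shows "Ap b W g (\<lambda>x. \<Sum>i\<in>F. f i x)"
  using assms
proof (induction F rule: finite_induct)
  case empty then show ?case by (simp add: Ap_zero)
next
  case (insert i F)
  have m: "(\<lambda>x. \<Sum>i\<in>F. f i x) \<in> borel_measurable borel"
    using insert.prems by (intro borel_measurable_sum) auto
  have IH: "Ap b W g (\<lambda>x. \<Sum>i\<in>F. f i x)" using insert.IH insert.prems by auto
  have "Ap b W g (\<lambda>x. f i x + (\<Sum>i\<in>F. f i x))"
    by (rule Ap_add) (use insert.prems m IH in auto)
  then show ?case by (simp add: sum.insert[OF insert.hyps])
qed

lemma Ap_cont: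
  assumes fc: "continuous_on {0..b} f"
  shows "Ap b W g f"
  unfolding Ap_def
proof (intro allI impI)
  fix e :: real assume e: "e > 0"
  obtain Wr where Wr: "(\<integral>\<^sup>+x. ennreal (W x) * indicator {0..b} x \<partial>lborel) = ennreal Wr" "Wr \<ge> 0"
    using Wfin by (cases rule: ennreal_cases[of "\<integral>\<^sup>+x. ennreal (W x) * indicator {0..b} x \<partial>lborel"]) auto
  define \<delta> where "\<delta> = sqrt (e / (4 * (Wr + 1)))"
  have dp: "\<delta> > 0" unfolding \<delta>_def using e Wr by auto
  have d2: "\<delta>\<^sup>2 = e / (4 * (Wr + 1))" unfolding \<delta>_def using e Wr by simp
  define h where "h = f \<circ> inv_into {0..b} g"
  have hc: "continuous_on (g ` {0..b}) h" unfolding h_def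
  proof (rule continuous_on_compose)
    show "continuous_on (g ` {0..b}) (inv_into {0..b} g)"
      by (rule continuous_on_inv[OF gc compact_Icc]) (simp add: gi)
    have "inv_into {0..b} g ` g ` {0..b} = {0..b}" using gi by (rule inv_into_image_cancel) simp
    then show "continuous_on (inv_into {0..b} g ` g ` {0..b}) f" using fc by simp
  qed
  obtain q where q: "real_polynomial_function q" and qa: "\<And>y. y \<in> g ` {0..b} \<Longrightarrow> \<bar>h y - q y\<bar> < \<delta>"
    using Stone_Weierstrass_real_polynomial_function[OF compact_continuous_image[OF gc compact_Icc] hc dp]
    by blast
  have qx: "\<bar>f x - q (g x)\<bar> < \<delta>" if "x \<in> {0..b}" for x
  proof -
    have "h (g x) = f x" using that gi by (simp add: h_def inv_into_f_f)
    then show ?thesis using qa[of "g x"] that by simp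
  qed
  have "Qn b W (\<lambda>x. f x - q (g x)) \<le> (\<integral>\<^sup>+x. ennreal (\<delta>\<^sup>2) * (ennreal (W x) * indicator {0..b} x) \<partial>lborel)"
    unfolding Qn_def
  proof (intro nn_integral_mono)
    fix x
    show "ennreal ((f x - q (g x))\<^sup>2 * W x) * indicator {0..b} x \<le> ennreal (\<delta>\<^sup>2) * (ennreal (W x) * indicator {0..b} x)"
    proof (cases "x \<in> {0..b}")
      case True
      have "\<bar>f x - q (g x)\<bar>\<^sup>2 \<le> \<delta>\<^sup>2" by (rule power_mono) (use qx[OF True] in auto)
      then have "(f x - q (g x))\<^sup>2 \<le> \<delta>\<^sup>2" by simp
      then have "(f x - q (g x))\<^sup>2 * W x \<le> \<delta>\<^sup>2 * W x" using Wnn by (intro mult_right_mono) auto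
      then have "ennreal ((f x - q (g x))\<^sup>2 * W x) \<le> ennreal (\<delta>\<^sup>2 * W x)" by (rule ennreal_leI)
      also have "\<dots> = ennreal (\<delta>\<^sup>2) * ennreal (W x)" using Wnn[of x] by (simp add: ennreal_mult)
      finally show ?thesis using True by simp
    qed simp
  qed
  also have "\<dots> = ennreal (\<delta>\<^sup>2) * ennreal Wr" by (subst nn_integral_cmult) (auto simp: Wr)
  also have "\<dots> = ennreal (\<delta>\<^sup>2 * Wr)" using Wr by (simp add: ennreal_mult)
  also have "\<dots> < ennreal e"
  proof (rule ennreal_lessI[OF e])
    have "\<delta>\<^sup>2 * Wr \<le> \<delta>\<^sup>2 * (Wr + 1)" using dp by simp
    also have "\<dots> = e / 4" using d2 Wr by (simp add: field_simps)
    finally show "\<delta>\<^sup>2 * Wr < e" using e by simp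
  qed
  finally show "\<exists>p. polynomial_function p \<and> Qn b W (\<lambda>x. f x - p (g x)) < ennreal e"
    using q by (intro exI[of _ q]) (simp add: real_polynomial_function_eq)
qed

end

context wsetup
begin

lemma small_unif:
  assumes e: "e > 0"
  obtains d where "d > 0" "\<And>a. (\<And>x. x \<in> {0..b} \<Longrightarrow> \<bar>a x\<bar> \<le> d) \<Longrightarrow> Qn b W a < ennreal e"
proof -
  obtain Wr where Wr: "(\<integral>\<^sup>+x. ennreal (W x) * indicator {0..b} x \<partial>lborel) = ennreal Wr" "Wr \<ge> 0"
    using Wfin by (cases rule: ennreal_cases[of "\<integral>\<^sup>+x. ennreal (W x) * indicator {0..b} x \<partial>lborel"]) auto
  define \<delta> where "\<delta> = sqrt (e / (4 * (Wr + 1)))"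
  have dp: "\<delta> > 0" unfolding \<delta>_def using e Wr by auto
  have d2: "\<delta>\<^sup>2 = e / (4 * (Wr + 1))" unfolding \<delta>_def using e Wr by simp
  show ?thesis
  proof (rule that[OF dp])
    fix a assume qx: "\<And>x. x \<in> {0..b} \<Longrightarrow> \<bar>a x\<bar> \<le> \<delta>"
    have "Qn b W a \<le> (\<integral>\<^sup>+x. ennreal (\<delta>\<^sup>2) * (ennreal (W x) * indicator {0..b} x) \<partial>lborel)"
      unfolding Qn_def
    proof (intro nn_integral_mono)
      fix x
      show "ennreal ((a x)\<^sup>2 * W x) * indicator {0..b} x \<le> ennreal (\<delta>\<^sup>2) * (ennreal (W x) * indicator {0..b} x)"
      proof (cases "x \<in> {0..b}")
        case True
        have "\<bar>a x\<bar>\<^sup>2 \<le> \<delta>\<^sup>2" by (rule power_mono) (use qx[OF True] in auto)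
        then have "(a x)\<^sup>2 \<le> \<delta>\<^sup>2" by simp
        then have "(a x)\<^sup>2 * W x \<le> \<delta>\<^sup>2 * W x" using Wnn by (intro mult_right_mono) auto
        then have "ennreal ((a x)\<^sup>2 * W x) \<le> ennreal (\<delta>\<^sup>2 * W x)" by (rule ennreal_leI)
        also have "\<dots> = ennreal (\<delta>\<^sup>2) * ennreal (W x)" using Wnn[of x] by (simp add: ennreal_mult)
        finally show ?thesis using True by simp
      qed simp
    qed
    also have "\<dots> = ennreal (\<delta>\<^sup>2) * ennreal Wr" by (subst nn_integral_cmult) (auto simp: Wr)
    also have "\<dots> = ennreal (\<delta>\<^sup>2 * Wr)" using Wr by (simp add: ennreal_mult)
    also have "\<dots> < ennreal e"
    proof (rule ennreal_lessI[OF e])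
      have "\<delta>\<^sup>2 * Wr \<le> \<delta>\<^sup>2 * (Wr + 1)" using dp by simp
      also have "\<dots> = e / 4" using d2 Wr by (simp add: field_simps)
      finally show "\<delta>\<^sup>2 * Wr < e" using e by simp
    qed
    finally show "Qn b W a < ennreal e" .
  qed
qed

lemma Ap_ind:
  assumes A[measurable]: "A \<in> sets borel"
  shows "Ap b W g (indicator A)"
proof (rule Ap_lim)
  show "indicator A \<in> borel_measurable borel" by measurable
  fix e :: real assume e: "e > 0"
  define M where "M = density lborel (\<lambda>x. ennreal (W x) * indicator {0..b} x)"
  have sM: "sets M = sets borel" unfolding M_def by simp
  have spM: "space M = UNIV" unfolding M_def by simp
  have emM: "emeasure M X = (\<integral>\<^sup>+x. ennreal (W x) * indicator {0..b} x * indicator X x \<partial>lborel)"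
    if "X \<in> sets borel" for X
    unfolding M_def by (subst emeasure_density) (use that in auto)
  have finU: "emeasure M (space M) \<noteq> \<infinity>"
  proof -
    have "emeasure M UNIV = (\<integral>\<^sup>+x. ennreal (W x) * indicator {0..b} x \<partial>lborel)"
      by (simp add: emM)
    then show ?thesis using Wfin spM by simp
  qed
  have fin: "emeasure M X \<noteq> \<infinity>" for X
  proof (cases "X \<in> sets M")
    case True
    then have "emeasure M X \<le> emeasure M (space M)" by (intro emeasure_mono) (auto simp: sets.sets_into_space)
    then show ?thesis using finU by (metis infinity_ennreal_def top.extremum_uniqueI)
  qed (simp add: emeasure_notin_sets)
  have em: "emeasure M X = ennreal (measure M X)" for X using fin[of X] by (simp add: emeasure_eq_ennreal_measure)
  have AM: "A \<in> sets M" using sM by simp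
  obtain K where K: "K \<subseteq> A" "compact K" "measure M A - e/2 < measure M K"
  proof (cases "measure M A - e/2 < 0")
    case True
    then show ?thesis using that[of "{}"] by simp
  next
    case False
    have "ennreal (measure M A - e/2) < ennreal (measure M A)"
      using False e by (intro ennreal_lessI) auto
    also have "\<dots> = (SUP K \<in> {K. K \<subseteq> A \<and> compact K}. emeasure M K)"
      using inner_regular[OF sM finU A] em by simp
    finally obtain K where "K \<subseteq> A" "compact K" "ennreal (measure M A - e/2) < emeasure M K"
      by (auto simp: less_SUP_iff)
    then show ?thesis using that em False by (auto simp: ennreal_less_iff)
  qed
  obtain U where U: "A \<subseteq> U" "open U" "measure M U < measure M A + e/2"
  proof -
    have "(INF U \<in> {U. A \<subseteq> U \<and> open U}. emeasure M U) = ennreal (measure M A)"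
      using outer_regular[OF sM finU A] em by simp
    also have "\<dots> < ennreal (measure M A + e/2)"
      using e by (intro ennreal_lessI) (auto intro: add_nonneg_pos)
    finally obtain U where "A \<subseteq> U" "open U" "emeasure M U < ennreal (measure M A + e/2)"
      by (auto simp: INF_less_iff)
    then show ?thesis using that em by (auto simp: ennreal_less_iff)
  qed
  have Kb: "K \<in> sets borel" using K by (simp add: borel_compact)
  have Ub: "U \<in> sets borel" using U by simp
  have "measure M (U - K) = measure M U - measure M K"
    by (rule measure_Diff) (use fin sM Kb Ub K U in auto)
  then have mUK: "measure M (U - K) < e" using K U by simp
  have "K \<inter> (- U) = {}" using K U by auto
  then obtain f :: "real \<Rightarrow> real" where f: "continuous_on UNIV f" "\<And>x. f x \<in> closed_segment 1 0"
      "\<And>x. x \<in> K \<Longrightarrow> f x = 1" "\<And>x. x \<in> - U \<Longrightarrow> f x = 0"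
    using Urysohn[of K "- U" 1 0] K U by (auto simp: compact_imp_closed open_closed)
  have f01: "0 \<le> f x" "f x \<le> 1" for x using f(2)[of x] by (auto simp: closed_segment_eq_real_ivl)
  have fm[measurable]: "f \<in> borel_measurable borel" using f(1) by (rule borel_measurable_continuous_onI)
  show "\<exists>k. k \<in> borel_measurable borel \<and> Ap b W g k \<and> Qn b W (\<lambda>x. indicator A x - k x) < ennreal e"
  proof (intro exI conjI)
    show "f \<in> borel_measurable borel" by fact
    show "Ap b W g f" by (rule Ap_cont) (use f(1) continuous_on_subset in blast)
    have "Qn b W (\<lambda>x. indicator A x - f x) \<le> (\<integral>\<^sup>+x. ennreal (W x) * indicator {0..b} x * indicator (U - K) x \<partial>lborel)"
      unfolding Qn_def
    proof (intro nn_integral_mono)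
      fix x
      have "(indicator A x - f x)\<^sup>2 \<le> indicator (U - K) x"
      proof (cases "x \<in> K")
        case True then show ?thesis using f(3) K by (auto simp: indicator_def)
      next
        case nK: False
        show ?thesis
        proof (cases "x \<in> U")
          case False then show ?thesis using f(4)[of x] U by (auto simp: indicator_def)
        next
          case True
          have "(indicator A x - f x)\<^sup>2 \<le> 1" using f01[of x]
            by (auto simp: indicator_def power2_eq_square mult_le_one)
          then show ?thesis using True nK by (simp add: indicator_def)
        qed
      qed
      then have "(indicator A x - f x)\<^sup>2 * W x \<le> W x * indicator (U - K) x"
        using Wnn[of x] by (simp add: mult.commute mult_left_mono)
      then have "ennreal ((indicator A x - f x)\<^sup>2 * W x) \<le> ennreal (W x * indicator (U - K) x)"
        by (rule ennreal_leI)
      then show "ennreal ((indicator A x - f x)\<^sup>2 * W x) * indicator {0..b} x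
          \<le> ennreal (W x) * indicator {0..b} x * indicator (U - K) x"
        by (auto simp: indicator_def)
    qed
    also have "\<dots> = emeasure M (U - K)" using Kb Ub by (simp add: emM)
    also have "\<dots> = ennreal (measure M (U - K))" by (rule em)
    also have "\<dots> < ennreal e" using mUK e by (intro ennreal_lessI) auto
    finally show "Qn b W (\<lambda>x. indicator A x - f x) < ennreal e" .
  qed
qed

end

context wsetup
begin

lemma Ap_bounded:
  assumes hm[measurable]: "h \<in> borel_measurable borel" and hb: "\<And>x. \<bar>h x\<bar> \<le> M"
  shows "Ap b W g h"
proof (rule Ap_lim[OF hm])
  fix e :: real assume e: "e > 0"
  obtain d where d: "d > 0" "\<And>a. (\<And>x. x \<in> {0..b} \<Longrightarrow> \<bar>a x\<bar> \<le> d) \<Longrightarrow> Qn b W a < ennreal e"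
    using small_unif[OF e] by blast
  obtain n :: nat where n: "inverse (real (Suc n)) < d" using reals_Archimedean[OF d(1)] by blast
  define N where "N = real (Suc n)"
  have Np: "N > 0" by (simp add: N_def)
  define K :: int where "K = \<lceil>M * N\<rceil> + 1"
  define k where "k x = (\<Sum>j\<in>{-K..K}. real_of_int j / N * indicator {x. \<lfloor>N * h x\<rfloor> = j} x)" for x
  have km[measurable]: "k \<in> borel_measurable borel" unfolding k_def by measurable
  have kx: "k x = real_of_int \<lfloor>N * h x\<rfloor> / N" for x
  proof -
    have "\<bar>N * h x\<bar> \<le> M * N" using hb[of x] Np by (simp add: abs_mult mult.commute mult_left_mono)
    then have mem: "\<lfloor>N * h x\<rfloor> \<in> {-K..K}" unfolding K_def
      by (auto simp: abs_le_iff) (linarith+)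
    have eq: "(\<lambda>j. real_of_int j / N * indicator {x. \<lfloor>N * h x\<rfloor> = j} x)
        = (\<lambda>j. if \<lfloor>N * h x\<rfloor> = j then real_of_int \<lfloor>N * h x\<rfloor> / N else 0)"
      by (auto simp: indicator_def fun_eq_iff)
    show ?thesis unfolding k_def eq using mem by (simp add: sum.delta')
  qed
  show "\<exists>k. k \<in> borel_measurable borel \<and> Ap b W g k \<and> Qn b W (\<lambda>x. h x - k x) < ennreal e"
  proof (intro exI conjI)
    show "k \<in> borel_measurable borel" by fact
    show "Ap b W g k" unfolding k_def
    proof (rule Ap_sum)
      fix j assume "j \<in> {-K..K}"
      have ind: "Ap b W g (indicator {x. \<lfloor>N * h x\<rfloor> = j})" by (rule Ap_ind) measurable
      show "Ap b W g (\<lambda>x. real_of_int j / N * indicator {x. \<lfloor>N * h x\<rfloor> = j} x)"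
        by (rule Ap_scale[OF ind]) measurable
    qed (auto)
    show "Qn b W (\<lambda>x. h x - k x) < ennreal e"
    proof (rule d(2))
      fix x
      have fl: "real_of_int \<lfloor>N * h x\<rfloor> \<le> N * h x" "N * h x < real_of_int \<lfloor>N * h x\<rfloor> + 1"
        by linarith+
      have "0 \<le> h x - real_of_int \<lfloor>N * h x\<rfloor> / N" using fl Np by (simp add: field_simps)
      moreover have "h x - real_of_int \<lfloor>N * h x\<rfloor> / N < 1 / N"
      proof -
        have "h x - real_of_int \<lfloor>N * h x\<rfloor> / N = (N * h x - real_of_int \<lfloor>N * h x\<rfloor>) / N"
          using Np by (simp add: field_simps)
        also have "\<dots> < 1 / N" using Np by (intro divide_strict_right_mono) (use fl(2) in linarith, simp)
        finally show ?thesis .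
      qed
      moreover have "1 / N < d" using n by (simp add: N_def divide_inverse)
      ultimately show "\<bar>h x - k x\<bar> \<le> d" by (simp add: kx)
    qed
  qed
qed

lemma Ap_L2:
  assumes vm[measurable]: "v \<in> borel_measurable borel" and vf: "Qn b W v < \<infinity>"
  shows "Ap b W g v"
proof (rule Ap_lim[OF vm])
  fix e :: real assume e: "e > 0"
  define k where "k m x = max (- real m) (min (real m) (v x))" for m :: nat and x
  have km[measurable]: "k m \<in> borel_measurable borel" for m unfolding k_def by measurable
  have kb: "\<bar>v x - k m x\<bar> \<le> \<bar>v x\<bar>" for m x unfolding k_def by auto
  define u where "u m x = (v x - k m x)\<^sup>2 * W x * indicator {0..b} x" for m x
  have um[measurable]: "u m \<in> borel_measurable lborel" for m unfolding u_def by measurable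
  have "(\<lambda>m. (\<integral>\<^sup>+x. norm (0 - u m x) \<partial>lborel)) \<longlonglongrightarrow> 0"
  proof (rule nn_integral_dominated_convergence_norm[where w = "\<lambda>x. (v x)\<^sup>2 * W x * indicator {0..b} x"])
    show "(\<lambda>x. 0::real) \<in> borel_measurable lborel" by simp
    show "(\<lambda>x. (v x)\<^sup>2 * W x * indicator {0..b} x) \<in> borel_measurable lborel" by measurable
    show "AE x in lborel. norm (u j x) \<le> (v x)\<^sup>2 * W x * indicator {0..b} x" for j
    proof (intro AE_I2)
      fix x
      have "(v x - k j x)\<^sup>2 \<le> (v x)\<^sup>2"
        using kb[of x j] by (metis abs_ge_zero power2_abs power_mono)
      then have "(v x - k j x)\<^sup>2 * W x \<le> (v x)\<^sup>2 * W x" using Wnn by (intro mult_right_mono) auto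
      then show "norm (u j x) \<le> (v x)\<^sup>2 * W x * indicator {0..b} x"
        using Wnn[of x] by (auto simp: u_def indicator_def)
    qed
    have "(\<integral>\<^sup>+x. ennreal ((v x)\<^sup>2 * W x * indicator {0..b} x) \<partial>lborel) = Qn b W v"
      unfolding Qn_def by (intro nn_integral_cong) (auto simp: indicator_def)
    then show "(\<integral>\<^sup>+x. ennreal ((v x)\<^sup>2 * W x * indicator {0..b} x) \<partial>lborel) < \<infinity>" using vf by simp
    show "AE x in lborel. (\<lambda>m. u m x) \<longlonglongrightarrow> 0"
    proof (intro AE_I2 tendsto_eventually)
      fix x
      obtain m0 :: nat where m0: "\<bar>v x\<bar> \<le> real m0" using real_arch_simple by blast
      show "\<forall>\<^sub>F m in sequentially. u m x = 0"
        unfolding eventually_sequentially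
      proof (intro exI allI impI)
        fix m assume "m0 \<le> m"
        then have "\<bar>v x\<bar> \<le> real m" using m0 by linarith
        then have "k m x = v x" unfolding k_def by auto
        then show "u m x = 0" by (simp add: u_def)
      qed
    qed
  qed (rule um)
  moreover have "(\<integral>\<^sup>+x. norm (0 - u m x) \<partial>lborel) = Qn b W (\<lambda>x. v x - k m x)" for m
    unfolding Qn_def u_def using Wnn by (intro nn_integral_cong) (auto simp: indicator_def)
  ultimately have "(\<lambda>m. Qn b W (\<lambda>x. v x - k m x)) \<longlonglongrightarrow> 0" by simp
  then have "\<forall>\<^sub>F m in sequentially. Qn b W (\<lambda>x. v x - k m x) < ennreal e"
    using e by (intro order_tendstoD(2)) auto
  then obtain m where m: "Qn b W (\<lambda>x. v x - k m x) < ennreal e"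
    by (auto simp: eventually_sequentially)
  have "Ap b W g (k m)"
    by (rule Ap_bounded[where M = "real m"]) (auto simp: k_def)
  then show "\<exists>k. k \<in> borel_measurable borel \<and> Ap b W g k \<and> Qn b W (\<lambda>x. v x - k x) < ennreal e"
    using m km by blast
qed

end

context wsetup
begin

lemma Qn_bounded:
  assumes "\<And>x. x \<in> {0..b} \<Longrightarrow> \<bar>a x\<bar> \<le> B"
  shows "Qn b W a < \<infinity>"
proof -
  have "Qn b W a \<le> (\<integral>\<^sup>+x. ennreal (B\<^sup>2) * (ennreal (W x) * indicator {0..b} x) \<partial>lborel)"
    unfolding Qn_def
  proof (intro nn_integral_mono)
    fix x
    show "ennreal ((a x)\<^sup>2 * W x) * indicator {0..b} x \<le> ennreal (B\<^sup>2) * (ennreal (W x) * indicator {0..b} x)"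
    proof (cases "x \<in> {0..b}")
      case True
      have "\<bar>a x\<bar>\<^sup>2 \<le> B\<^sup>2" by (rule power_mono) (use assms[OF True] in auto)
      then have "(a x)\<^sup>2 \<le> B\<^sup>2" by simp
      then have "(a x)\<^sup>2 * W x \<le> B\<^sup>2 * W x" using Wnn by (intro mult_right_mono) auto
      then have "ennreal ((a x)\<^sup>2 * W x) \<le> ennreal (B\<^sup>2 * W x)" by (rule ennreal_leI)
      also have "\<dots> = ennreal (B\<^sup>2) * ennreal (W x)" using Wnn[of x] by (simp add: ennreal_mult)
      finally show ?thesis using True by simp
    qed simp
  qed
  also have "\<dots> = ennreal (B\<^sup>2) * (\<integral>\<^sup>+x. ennreal (W x) * indicator {0..b} x \<partial>lborel)"
    by (rule nn_integral_cmult) measurable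
  also have "\<dots> < \<infinity>" using Wfin by (simp add: ennreal_mult_less_top)
  finally show ?thesis .
qed

lemma transfer_complete:
  fixes m mi \<omega> :: "real \<Rightarrow> real" and \<phi> :: "nat \<Rightarrow> real \<Rightarrow> real"
  assumes ab: "\<alpha> > -1" "\<beta> > -1"
    and mm[measurable]: "m \<in> borel_measurable borel" and mim[measurable]: "mi \<in> borel_measurable borel"
    and om[measurable]: "\<omega> \<in> borel_measurable borel"
    and Wid: "\<And>x. W x = (m x)\<^sup>2 * \<omega> x"
    and inv: "\<And>x. 0 < x \<Longrightarrow> x < b \<Longrightarrow> m x * mi x = 1"
    and phi: "\<And>n x. \<phi> n x = m x * jacobiP \<alpha> \<beta> n (g x)"
  shows "complete_in b \<omega> \<phi>"
  unfolding complete_in_def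
proof (intro conjI ballI allI impI)
  have Pm[measurable]: "(\<lambda>x. jacobiP \<alpha> \<beta> n (g x)) \<in> borel_measurable borel" for n
    unfolding jacobiP_def by measurable
  have phim[measurable]: "\<phi> n \<in> borel_measurable borel" for n
  proof -
    have "\<phi> n = (\<lambda>x. m x * jacobiP \<alpha> \<beta> n (g x))" by (simp add: fun_eq_iff phi)
    then show ?thesis by simp
  qed
  fix n
  show "\<phi> n \<in> L2w b \<omega>"
    unfolding L2w_def
  proof (intro CollectI conjI)
    show "set_borel_measurable lborel {0..b} (\<phi> n)"
      unfolding set_borel_measurable_def by measurable
    have eq: "(\<integral>\<^sup>+x. ennreal ((\<phi> n x)\<^sup>2 * \<omega> x) * indicator {0..b} x \<partial>lborel)
        = Qn b W (\<lambda>x. jacobiP \<alpha> \<beta> n (g x))"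
      unfolding Qn_def by (intro nn_integral_cong) (simp add: phi Wid power_mult_distrib algebra_simps)
    have "continuous_on UNIV (jacobiP \<alpha> \<beta> n)" unfolding jacobiP_def by (intro continuous_intros) auto
    then have "continuous_on {0..b} (\<lambda>x. jacobiP \<alpha> \<beta> n (g x))"
      by (rule continuous_on_compose2[OF _ gc]) auto
    then have "bounded ((\<lambda>x. jacobiP \<alpha> \<beta> n (g x)) ` {0..b})"
      by (intro compact_imp_bounded compact_continuous_image) auto
    then obtain B where B: "\<forall>y\<in>(\<lambda>x. jacobiP \<alpha> \<beta> n (g x)) ` {0..b}. norm y \<le> B"
      unfolding bounded_iff by blast
    then have "\<And>x. x \<in> {0..b} \<Longrightarrow> \<bar>jacobiP \<alpha> \<beta> n (g x)\<bar> \<le> B" by auto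
    then show "(\<integral>\<^sup>+x. ennreal ((\<phi> n x)\<^sup>2 * \<omega> x) * indicator {0..b} x \<partial>lborel) < \<infinity>"
      unfolding eq by (rule Qn_bounded)
  qed
next
  fix u and \<epsilon> :: real
  assume u: "u \<in> L2w b \<omega>" and e: "\<epsilon> > 0"
  define ui where "ui x = indicator {0..b} x *\<^sub>R u x" for x
  have uim[measurable]: "ui \<in> borel_measurable borel"
    using u unfolding L2w_def set_borel_measurable_def ui_def by simp
  have ufin: "(\<integral>\<^sup>+x. ennreal ((u x)\<^sup>2 * \<omega> x) * indicator {0..b} x \<partial>lborel) < \<infinity>"
    using u unfolding L2w_def by simp
  define v where "v x = ui x * mi x" for x
  have vm[measurable]: "v \<in> borel_measurable borel" unfolding v_def by measurable
  have AEx: "AE x in lborel. x \<noteq> 0 \<and> x \<noteq> b"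
    using AE_lborel_singleton[of "0::real"] AE_lborel_singleton[of b] by eventually_elim auto
  have vu: "v x * m x = u x" if "x \<in> {0..b}" "x \<noteq> 0" "x \<noteq> b" for x
  proof -
    have "0 < x" "x < b" using that by auto
    then have "m x * mi x = 1" by (rule inv)
    then show ?thesis using that(1) by (simp add: v_def ui_def algebra_simps)
  qed
  have "Qn b W v = (\<integral>\<^sup>+x. ennreal ((u x)\<^sup>2 * \<omega> x) * indicator {0..b} x \<partial>lborel)"
    unfolding Qn_def
  proof (intro nn_integral_cong_AE, use AEx in eventually_elim)
    case (elim x)
    show ?case
    proof (cases "x \<in> {0..b}")
      case True
      have "(v x)\<^sup>2 * W x = (v x * m x)\<^sup>2 * \<omega> x" by (simp add: Wid power_mult_distrib)
      then show ?thesis using vu[OF True] elim by simp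
    qed simp
  qed
  then have "Qn b W v < \<infinity>" using ufin by simp
  then have "Ap b W g v" by (rule Ap_L2[OF vm])
  then obtain p where p: "polynomial_function p" and vp: "Qn b W (\<lambda>x. v x - p (g x)) < ennreal \<epsilon>"
    using e unfolding Ap_def by blast
  obtain N c where Nc: "\<And>t. p t = (\<Sum>k<N. c k * jacobiP \<alpha> \<beta> k t)"
    using polyfun_span[OF ab p] by blast
  have "(\<integral>\<^sup>+x. ennreal ((u x - (\<Sum>n<N. c n * \<phi> n x))\<^sup>2 * \<omega> x) * indicator {0..b} x \<partial>lborel)
      = Qn b W (\<lambda>x. v x - p (g x))"
    unfolding Qn_def
  proof (intro nn_integral_cong_AE, use AEx in eventually_elim)
    case (elim x)
    show ?case
    proof (cases "x \<in> {0..b}")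
      case True
      have "(\<Sum>n<N. c n * \<phi> n x) = m x * p (g x)"
        by (simp add: phi Nc sum_distrib_left algebra_simps)
      then have "u x - (\<Sum>n<N. c n * \<phi> n x) = m x * (v x - p (g x))"
        using vu[OF True] elim by (simp add: algebra_simps)
      then have "(u x - (\<Sum>n<N. c n * \<phi> n x))\<^sup>2 * \<omega> x = (v x - p (g x))\<^sup>2 * W x"
        by (simp add: Wid power_mult_distrib)
      then show ?thesis by simp
    qed simp
  qed
  then show "\<exists>N c. (\<integral>\<^sup>+x. ennreal ((u x - (\<Sum>n<N. c n * \<phi> n x))\<^sup>2 * \<omega> x) * indicator {0..b} x \<partial>lborel) < ennreal \<epsilon>"
    using vp by (intro exI[of _ N] exI[of _ c]) simp
qed

end

theorem theorem3p5:
  fixes b \<sigma> \<alpha> \<beta> \<mu> \<eta> :: real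
  assumes "b > 0" and "\<sigma> > 0" and "\<alpha> > -1" and "\<beta> > -1"
  shows "complete_in b (\<lambda>x. x powr (\<sigma> - 1) * w1 b \<sigma> \<alpha> \<beta> \<mu> \<eta> x) (J1 b \<sigma> \<alpha> \<beta> \<mu> \<eta>)
       \<and> complete_in b (\<lambda>x. x powr (\<sigma> - 1) * w2 b \<sigma> \<alpha> \<beta> \<eta> x) (J2 b \<sigma> \<alpha> \<beta> \<eta>)"
proof -
  note bp = assms(1) and sp = assms(2) and ap = assms(3) and bep = assms(4)
  define g where "g x = 2 * (x / b) powr \<sigma> - 1" for x
  define W where "W = Wf b \<sigma> \<alpha> \<beta>"
  have gc: "continuous_on {0..b} g"
  proof -
    have "continuous_on {0..b} (\<lambda>x. (x / b) powr \<sigma>)"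
      by (rule continuous_on_powr') (use bp sp in \<open>auto intro!: continuous_intros\<close>)
    then show ?thesis unfolding g_def by (intro continuous_on_diff continuous_on_mult continuous_on_const)
  qed
  have gi: "inj_on g {0..b}"
  proof (rule inj_onI)
    fix x y assume x: "x \<in> {0..b}" and y: "y \<in> {0..b}" and e: "g x = g y"
    then have "(x / b) powr \<sigma> = (y / b) powr \<sigma>" by (simp add: g_def)
    then have "((x / b) powr \<sigma>) powr (1/\<sigma>) = ((y / b) powr \<sigma>) powr (1/\<sigma>)" by simp
    then have "x / b = y / b" using x y bp sp by (simp add: powr_powr)
    then show "x = y" using bp by simp
  qed
  interpret wsetup b W g
  proof
    show "\<And>x. 0 \<le> W x" by (simp add: W_def Wf_nonneg)
    show "W \<in> borel_measurable borel" unfolding W_def by (rule Wf_meas)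
    show "(\<integral>\<^sup>+x. ennreal (W x) * indicator {0..b} x \<partial>lborel) < \<infinity>"
      unfolding W_def by (rule W_fin[OF bp sp ap bep])
    show "continuous_on {0..b} g" by fact
    show "inj_on g {0..b}" by fact
    show "g \<in> borel_measurable borel" unfolding g_def by measurable
  qed
  show ?thesis
  proof
    define c where "c = \<sigma> * (\<beta> - \<eta> - \<mu>)"
    show "complete_in b (\<lambda>x. x powr (\<sigma> - 1) * w1 b \<sigma> \<alpha> \<beta> \<mu> \<eta> x) (J1 b \<sigma> \<alpha> \<beta> \<mu> \<eta>)"
    proof (rule transfer_complete[where m = "\<lambda>x. x powr c" and mi = "\<lambda>x. x powr (- c)"])
      show "\<alpha> > -1" "\<beta> > -1" by fact+
      show "(\<lambda>x. x powr c) \<in> borel_measurable borel" by measurable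
      show "(\<lambda>x. x powr (- c)) \<in> borel_measurable borel" by measurable
      show "(\<lambda>x. x powr (\<sigma> - 1) * w1 b \<sigma> \<alpha> \<beta> \<mu> \<eta> x) \<in> borel_measurable borel"
        unfolding w1_def by measurable
      fix x
      have e: "\<sigma>*\<beta>+\<sigma>-1 = c + c + (\<sigma> - 1) + \<sigma> * (2 * (\<eta> + \<mu>) - \<beta>)"
        unfolding c_def by (simp add: algebra_simps)
      have "x powr (\<sigma>*\<beta>+\<sigma>-1) = x powr c * x powr c * x powr (\<sigma> - 1) * x powr (\<sigma> * (2 * (\<eta> + \<mu>) - \<beta>))"
        by (simp only: e powr_add)
      then show "W x = (x powr c)\<^sup>2 * (x powr (\<sigma> - 1) * w1 b \<sigma> \<alpha> \<beta> \<mu> \<eta> x)"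
        unfolding W_def Wf_def w1_def by (simp add: power2_eq_square mult_ac)
      show "0 < x \<Longrightarrow> x < b \<Longrightarrow> x powr c * x powr (- c) = 1"
        by (simp add: powr_add[symmetric])
      show "J1 b \<sigma> \<alpha> \<beta> \<mu> \<eta> n x = x powr c * jacobiP \<alpha> \<beta> n (g x)" for n
        unfolding J1_def g_def c_def by simp
    qed
  next
    define Y where "Y x = b powr \<sigma> - x powr \<sigma>" for x
    show "complete_in b (\<lambda>x. x powr (\<sigma> - 1) * w2 b \<sigma> \<alpha> \<beta> \<eta> x) (J2 b \<sigma> \<alpha> \<beta> \<eta>)"
    proof (rule transfer_complete[where m = "\<lambda>x. x powr (\<sigma> * \<eta>) * Y x powr \<alpha>"
                            and mi = "\<lambda>x. x powr (- (\<sigma> * \<eta>)) * Y x powr (- \<alpha>)"])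
      show "\<alpha> > -1" "\<beta> > -1" by fact+
      show "(\<lambda>x. x powr (\<sigma> * \<eta>) * Y x powr \<alpha>) \<in> borel_measurable borel" unfolding Y_def by measurable
      show "(\<lambda>x. x powr (- (\<sigma> * \<eta>)) * Y x powr (- \<alpha>)) \<in> borel_measurable borel" unfolding Y_def by measurable
      show "(\<lambda>x. x powr (\<sigma> - 1) * w2 b \<sigma> \<alpha> \<beta> \<eta> x) \<in> borel_measurable borel"
        unfolding w2_def by measurable
      fix x
      have e: "\<sigma>*\<beta>+\<sigma>-1 = \<sigma> * \<eta> + \<sigma> * \<eta> + (\<sigma> - 1) + \<sigma> * (\<beta> - 2 * \<eta>)"
        by (simp add: algebra_simps)
      have ex: "x powr (\<sigma>*\<beta>+\<sigma>-1) = x powr (\<sigma> * \<eta>) * x powr (\<sigma> * \<eta>) * x powr (\<sigma> - 1) * x powr (\<sigma> * (\<beta> - 2 * \<eta>))"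
        by (simp only: e powr_add)
      have ea: "\<alpha> = \<alpha> + \<alpha> + - \<alpha>" by simp
      have ey: "Y x powr \<alpha> = Y x powr \<alpha> * Y x powr \<alpha> * Y x powr (- \<alpha>)"
        by (subst ea) (simp only: powr_add)
      show "W x = (x powr (\<sigma> * \<eta>) * Y x powr \<alpha>)\<^sup>2 * (x powr (\<sigma> - 1) * w2 b \<sigma> \<alpha> \<beta> \<eta> x)"
        unfolding W_def Wf_def w2_def Y_def[symmetric] ex by (subst ey) (simp add: power2_eq_square mult_ac)
      assume x: "0 < x" "x < b"
      then have "Y x > 0" using sp unfolding Y_def by (simp add: powr_less_mono2)
      then show "x powr (\<sigma> * \<eta>) * Y x powr \<alpha> * (x powr (- (\<sigma> * \<eta>)) * Y x powr (- \<alpha>)) = 1"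
        using x by (simp add: powr_minus field_simps)
    next
      show "J2 b \<sigma> \<alpha> \<beta> \<eta> n x = x powr (\<sigma> * \<eta>) * Y x powr \<alpha> * jacobiP \<alpha> \<beta> n (g x)" for n x
        unfolding J2_def g_def Y_def by simp
    qed
  qed
qed

end
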